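(* Let $\phi$ be a uniformly convex norm on $\mathbf{R}^n$ of class $\mathcal{C}^2$ on $\mathbf{R}^n\setminus\{0\}$, $K\subseteq\mathbf{R}^n$ closed, $\rho>0$, $U=\{x:\delta^\phi_K(x)<\rho\}$, and suppose $U\cap\Sigma^\phi(K)=\varnothing$. Then $\underline{r}^\phi_K(a,\eta)\ge\rho$ for every $(a,\eta)\in N^\phi(K)$. In particular, if $K$ is convex then $\underline{r}^\phi_K(a,\eta)=+\infty$ for every $(a,\eta)\in N^\phi(K)$.
   Context: A norm $\phi$ is uniformly convex if there is $\gamma>0$ with $x\mapsto\phi(x)-\gamma|x|$ convex. For closed $K$: $\delta^\phi_K(x)=\inf\{\phi(y-x):y\in K\}$; $\Sigma^\phi(K)$ is the set of $x\in\mathbf{R}^n\setminus K$ at which $\delta^\phi_K$ is not differentiable; $N^\phi(K)=\{(a,\eta):a\in K,\ \phi(\eta)=1,\ \delta^\phi_K(a+s\eta)=s\text{ for some }s>0\}$; $r^\phi_K(a,\eta)=\sup\{s>0:\delta^\phi_K(a+s\eta)=s\}$; for $\sigma\ge1$, $K_\sigma=\{a+\rho'\eta:(a,\eta)\in N^\phi(K),\ 0<\sigma\rho'\le r^\phi_K(a,\eta)\}$; $\Theta^n(\mu,x)=\lim_{r\downarrow0}\mu(\mathbf{B}(x,r))/(\alpha(n)r^n)$; $\underline{r}^\phi_K(a,\eta)=\sup\bigl(\{\sigma r:0<r<r^\phi_K(a,\eta),\ \sigma>1,\ \Theta^n(\mathscr{L}^n\llcorner K_\sigma,a+r\eta)=1\}\cup\{0\}\bigr)$.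 *)

theory Defs
  imports "HOL-Analysis.Analysis"
begin

definition is_norm :: "('a::euclidean_space \<Rightarrow> real) \<Rightarrow> bool" where
  "is_norm \<phi> \<longleftrightarrow> (\<forall>x. 0 \<le> \<phi> x) \<and> (\<forall>x. \<phi> x = 0 \<longleftrightarrow> x = 0)
     \<and> (\<forall>t x. \<phi> (t *\<^sub>R x) = \<bar>t\<bar> * \<phi> x) \<and> (\<forall>x y. \<phi> (x + y) \<le> \<phi> x + \<phi> y)"

definition uniformly_convex_norm :: "('a::euclidean_space \<Rightarrow> real) \<Rightarrow> bool" where
  "uniformly_convex_norm \<phi> \<longleftrightarrow> is_norm \<phi> \<and>
     (\<exists>\<gamma>>0. convex_on UNIV (\<lambda>x. \<phi> x - \<gamma> * norm x))"

definition C2_on :: "'a::euclidean_space set \<Rightarrow> ('a \<Rightarrow> real) \<Rightarrow> bool" where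
  "C2_on S f \<longleftrightarrow> (\<exists>(f'::'a \<Rightarrow> ('a \<Rightarrow>\<^sub>L real)) (f''::'a \<Rightarrow> ('a \<Rightarrow>\<^sub>L ('a \<Rightarrow>\<^sub>L real))).
     (\<forall>x\<in>S. (f has_derivative blinfun_apply (f' x)) (at x)) \<and>
     (\<forall>x\<in>S. (f' has_derivative blinfun_apply (f'' x)) (at x)) \<and>
     continuous_on S f'')"

definition dist_fun :: "('a::euclidean_space \<Rightarrow> real) \<Rightarrow> 'a set \<Rightarrow> 'a \<Rightarrow> real" where
  "dist_fun \<phi> K x = Inf {\<phi> (y - x) | y. y \<in> K}"

definition Sigma_set :: "('a::euclidean_space \<Rightarrow> real) \<Rightarrow> 'a set \<Rightarrow> 'a set" where
  "Sigma_set \<phi> K = {x. x \<notin> K \<and> \<not> (dist_fun \<phi> K differentiable (at x))}"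

definition normal_bundle :: "('a::euclidean_space \<Rightarrow> real) \<Rightarrow> 'a set \<Rightarrow> ('a \<times> 'a) set" where
  "normal_bundle \<phi> K = {(a, \<eta>). a \<in> K \<and> \<phi> \<eta> = 1 \<and>
      (\<exists>s>0. dist_fun \<phi> K (a + s *\<^sub>R \<eta>) = s)}"

definition reach :: "('a::euclidean_space \<Rightarrow> real) \<Rightarrow> 'a set \<Rightarrow> 'a \<Rightarrow> 'a \<Rightarrow> ereal" where
  "reach \<phi> K a \<eta> = Sup (ereal ` {s. s > 0 \<and> dist_fun \<phi> K (a + s *\<^sub>R \<eta>) = s})"

definition K_sigma :: "('a::euclidean_space \<Rightarrow> real) \<Rightarrow> 'a set \<Rightarrow> real \<Rightarrow> 'a set" where
  "K_sigma \<phi> K \<sigma> = {a + \<rho>' *\<^sub>R \<eta> | a \<eta> \<rho>'. (a, \<eta>) \<in> normal_bundle \<phi> K \<and> 0 < \<sigma> * \<rho>'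
      \<and> ereal (\<sigma> * \<rho>') \<le> reach \<phi> K a \<eta>}"

definition lebesgue_outer :: "'a::euclidean_space set \<Rightarrow> ennreal" where
  "lebesgue_outer A = (INF B \<in> {B. B \<in> sets lebesgue \<and> A \<subseteq> B}. emeasure lebesgue B)"

text \<open>Theta^n(L^n restricted to A, x) = 1 (closed balls, alpha(n) = volume of the unit ball).\<close>
definition density_one :: "'a::euclidean_space set \<Rightarrow> 'a \<Rightarrow> bool" where
  "density_one A x \<longleftrightarrow>
     ((\<lambda>r. enn2real (lebesgue_outer (A \<inter> cball x r)) /
           (measure lebesgue (cball (0::'a) 1) * r ^ DIM('a))) \<longlongrightarrow> 1) (at_right 0)"

definition lower_reach :: "('a::euclidean_space \<Rightarrow> real) \<Rightarrow> 'a set \<Rightarrow> 'a \<Rightarrow> 'a \<Rightarrow> ereal" where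
  "lower_reach \<phi> K a \<eta> = Sup ({ereal (\<sigma> * r) | \<sigma> r. 0 < r \<and> ereal r < reach \<phi> K a \<eta> \<and> \<sigma> > 1
       \<and> density_one (K_sigma \<phi> K \<sigma>) (a + r *\<^sub>R \<eta>)} \<union> {0})"

end

theory Submission
  imports Defs
begin


context
  fixes \<phi> :: "'a::euclidean_space \<Rightarrow> real"
  assumes nrm: "is_norm \<phi>"
begin

lemma phi_nonneg: "0 \<le> \<phi> x" using nrm by (simp add: is_norm_def)
lemma phi_zero_iff: "\<phi> x = 0 \<longleftrightarrow> x = 0" using nrm by (simp add: is_norm_def)
lemma phi_scale: "\<phi> (t *\<^sub>R x) = \<bar>t\<bar> * \<phi> x" using nrm by (simp add: is_norm_def)
lemma phi_tri: "\<phi> (x + y) \<le> \<phi> x + \<phi> y" using nrm by (simp add: is_norm_def)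
lemma phi_minus: "\<phi> (- x) = \<phi> x" using phi_scale[of "-1" x] by simp
lemma phi_commute: "\<phi> (x - y) = \<phi> (y - x)" using phi_minus[of "x - y"] by simp
lemma phi_diff_tri: "\<phi> (x - z) \<le> \<phi> (x - y) + \<phi> (y - z)"
  using phi_tri[of "x - y" "y - z"] by simp
lemma phi_0[simp]: "\<phi> 0 = 0" using phi_zero_iff by simp

lemma phi_sum: "finite S \<Longrightarrow> \<phi> (sum f S) \<le> (\<Sum>i\<in>S. \<phi> (f i))"
proof (induction S rule: finite_induct)
  case empty then show ?case by simp
next
  case (insert x F)
  then show ?case using phi_tri[of "f x" "sum f F"] by simp
qed

lemma phi_upper: "\<exists>M>0. \<forall>x. \<phi> x \<le> M * norm x"
proof -
  define M where "M = 1 + (\<Sum>i\<in>Basis. \<phi> i)"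
  have Mpos: "M > 0" unfolding M_def using phi_nonneg by (simp add: add_pos_nonneg sum_nonneg)
  have "\<phi> x \<le> M * norm x" for x
  proof -
    have "\<phi> x = \<phi> (\<Sum>i\<in>Basis. (x \<bullet> i) *\<^sub>R i)" by (simp add: euclidean_representation)
    also have "\<dots> \<le> (\<Sum>i\<in>Basis. \<phi> ((x \<bullet> i) *\<^sub>R i))" by (rule phi_sum) simp
    also have "\<dots> = (\<Sum>i\<in>Basis. \<bar>x \<bullet> i\<bar> * \<phi> i)" by (simp add: phi_scale)
    also have "\<dots> \<le> (\<Sum>i\<in>Basis. norm x * \<phi> i)"
      by (rule sum_mono, rule mult_right_mono) (auto simp: Basis_le_norm phi_nonneg)
    also have "\<dots> = norm x * (\<Sum>i\<in>Basis. \<phi> i)" by (simp add: sum_distrib_left)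
    also have "\<dots> \<le> M * norm x" unfolding M_def by (simp add: algebra_simps)
    finally show ?thesis .
  qed
  with Mpos show ?thesis by blast
qed

lemma phi_lipschitz: "\<exists>M>0. \<forall>x y. \<bar>\<phi> x - \<phi> y\<bar> \<le> M * norm (x - y)"
proof -
  obtain M where M: "M > 0" "\<And>x. \<phi> x \<le> M * norm x" using phi_upper by blast
  have "\<bar>\<phi> x - \<phi> y\<bar> \<le> M * norm (x - y)" for x y
  proof -
    have "\<phi> x \<le> \<phi> y + \<phi> (x - y)" using phi_tri[of y "x - y"] by simp
    moreover have "\<phi> y \<le> \<phi> x + \<phi> (x - y)" using phi_tri[of x "y - x"] phi_commute[of y x] by simp
    ultimately show ?thesis using M(2)[of "x - y"] by linarith
  qed
  with M show ?thesis by blast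
qed

lemma phi_cont: "continuous_on S \<phi>"
proof -
  obtain M where M: "M > 0" "\<And>x y. \<bar>\<phi> x - \<phi> y\<bar> \<le> M * norm (x - y)" using phi_lipschitz by blast
  have "M-lipschitz_on S \<phi>"
    by (rule lipschitz_onI) (use M in \<open>auto simp: dist_norm dist_real_def\<close>)
  then show ?thesis by (rule lipschitz_on_continuous_on)
qed

lemma phi_lower: "\<exists>C>0. \<forall>x. norm x \<le> C * \<phi> x"
proof -
  obtain b :: 'a where b: "b \<in> Basis" using nonempty_Basis by blast
  have ne: "sphere (0::'a) 1 \<noteq> {}" using b by (auto intro!: exI[of _ b])
  obtain z where z: "z \<in> sphere 0 1" "\<And>y. y \<in> sphere 0 1 \<Longrightarrow> \<phi> z \<le> \<phi> y"
    using continuous_attains_inf[OF compact_sphere ne phi_cont] by blast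
  have zpos: "\<phi> z > 0" using z(1) phi_nonneg[of z] phi_zero_iff[of z] by force
  have "norm x \<le> (1 / \<phi> z) * \<phi> x" for x
  proof (cases "x = 0")
    case True then show ?thesis by simp
  next
    case False
    have "\<phi> z \<le> \<phi> ((1 / norm x) *\<^sub>R x)" using z(2)[of "(1 / norm x) *\<^sub>R x"] False by simp
    also have "\<dots> = \<phi> x / norm x" by (simp add: phi_scale)
    finally have "\<phi> z * norm x \<le> \<phi> x" using False by (simp add: field_simps)
    then show ?thesis using zpos by (simp add: field_simps)
  qed
  then show ?thesis using zpos by (intro exI[of _ "1 / \<phi> z"]) auto
qed

end


context
  fixes \<phi> :: "'a::euclidean_space \<Rightarrow> real" and K :: "'a set"
  assumes nrm: "is_norm \<phi>" and clK: "closed K" and neK: "K \<noteq> {}"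
begin

lemma dist_le: "y \<in> K \<Longrightarrow> dist_fun \<phi> K x \<le> \<phi> (y - x)"
  unfolding dist_fun_def
proof (rule cInf_lower)
  assume "y \<in> K" then show "\<phi> (y - x) \<in> {\<phi> (y - x) |y. y \<in> K}" by blast
next
  show "bdd_below {\<phi> (y - x) |y. y \<in> K}"
    by (rule bdd_belowI[of _ 0]) (auto simp: phi_nonneg[OF nrm])
qed

lemma dist_nonneg: "0 \<le> dist_fun \<phi> K x"
  unfolding dist_fun_def using neK
  by (intro cInf_greatest) (auto simp: phi_nonneg[OF nrm])

lemma nearest_exists: "\<exists>b\<in>K. \<phi> (b - x) = dist_fun \<phi> K x"
proof -
  obtain y0 where y0: "y0 \<in> K" using neK by blast
  obtain C where C: "C > 0" "\<And>v. norm v \<le> C * \<phi> v" using phi_lower[OF nrm] by blast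
  define S where "S = K \<inter> cball x (C * \<phi> (y0 - x))"
  have cS: "compact S" unfolding S_def by (intro closed_Int_compact clK compact_cball)
  have y0S: "y0 \<in> S" unfolding S_def using y0 C(2)[of "y0 - x"] by (simp add: dist_norm norm_minus_commute)
  have cont: "continuous_on S (\<lambda>y. \<phi> (y - x))"
    by (rule continuous_on_compose2[OF phi_cont[OF nrm, of UNIV]]) (auto intro!: continuous_intros)
  obtain b where b: "b \<in> S" "\<And>y. y \<in> S \<Longrightarrow> \<phi> (b - x) \<le> \<phi> (y - x)"
    using continuous_attains_inf[OF cS _ cont] y0S by blast
  have lb: "\<phi> (b - x) \<le> \<phi> (y - x)" if "y \<in> K" for y
  proof (cases "y \<in> S")
    case True then show ?thesis using b by blast
  next
    case False
    then have "norm (y - x) > C * \<phi> (y0 - x)" using that unfolding S_def by (auto simp: dist_norm norm_minus_commute)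
    then have "C * \<phi> (y0 - x) < C * \<phi> (y - x)" using C(2)[of "y - x"] by linarith
    then have "\<phi> (y0 - x) < \<phi> (y - x)" using C(1) by simp
    then show ?thesis using b(2)[OF y0S] by linarith
  qed
  have "dist_fun \<phi> K x = \<phi> (b - x)"
    unfolding dist_fun_def
    by (rule cInf_eq_minimum) (use b(1) lb in \<open>auto simp: S_def\<close>)
  then show ?thesis using b(1) unfolding S_def by auto
qed

lemma dist_lip: "dist_fun \<phi> K x \<le> dist_fun \<phi> K y + \<phi> (x - y)"
proof -
  obtain b where b: "b \<in> K" "\<phi> (b - y) = dist_fun \<phi> K y" using nearest_exists by blast
  have "dist_fun \<phi> K x \<le> \<phi> (b - x)" using dist_le[OF b(1)] .
  also have "\<dots> \<le> \<phi> (b - y) + \<phi> (y - x)" by (rule phi_diff_tri[OF nrm])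
  finally show ?thesis using b(2) phi_commute[OF nrm, of x y] by simp
qed

lemma dist_lip_abs: "\<bar>dist_fun \<phi> K x - dist_fun \<phi> K y\<bar> \<le> \<phi> (x - y)"
  using dist_lip[of x y] dist_lip[of y x] phi_commute[OF nrm, of x y] by linarith

lemma dist_cont: "continuous_on S (dist_fun \<phi> K)"
proof -
  obtain M where M: "M > 0" "\<And>v. \<phi> v \<le> M * norm v" using phi_upper[OF nrm] by blast
  have "M-lipschitz_on S (dist_fun \<phi> K)"
    by (rule lipschitz_onI) (use M dist_lip_abs in \<open>auto simp: dist_norm dist_real_def intro: order_trans\<close>)
  then show ?thesis by (rule lipschitz_on_continuous_on)
qed

lemma dist_zero_iff: "dist_fun \<phi> K x = 0 \<longleftrightarrow> x \<in> K"
proof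
  assume "x \<in> K" then show "dist_fun \<phi> K x = 0"
    using dist_le[of x x] dist_nonneg[of x] phi_0[OF nrm] by simp
next
  assume h: "dist_fun \<phi> K x = 0"
  obtain b where b: "b \<in> K" "\<phi> (b - x) = dist_fun \<phi> K x" using nearest_exists by blast
  then have "b = x" using h phi_zero_iff[OF nrm, of "b - x"] by simp
  then show "x \<in> K" using b by simp
qed

end


lemma line_deriv:
  fixes f :: "'a::real_normed_vector \<Rightarrow> real"
  assumes "(f has_derivative L) (at p)"
  shows "((\<lambda>t. f (p + t *\<^sub>R v)) has_real_derivative L v) (at 0)"
proof -
  have l: "((\<lambda>t::real. p + t *\<^sub>R v) has_derivative (\<lambda>t. t *\<^sub>R v)) (at 0)"
    by (auto intro!: derivative_eq_intros)
  have "((\<lambda>t. f (p + t *\<^sub>R v)) has_derivative (\<lambda>t. L (t *\<^sub>R v))) (at 0)"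
    using has_derivative_compose[OF l, of f L] assms by simp
  moreover have "linear L" using assms has_derivative_linear by blast
  ultimately have "((\<lambda>t. f (p + t *\<^sub>R v)) has_derivative (\<lambda>t. t * L v)) (at 0)"
    by (simp add: linear_scale)
  moreover have "(\<lambda>t. t * L v) = (*) (L v)" by (auto simp: fun_eq_iff)
  ultimately show ?thesis unfolding has_field_derivative_def by simp
qed

lemma ratio_lim:
  fixes f :: "'a::real_normed_vector \<Rightarrow> real"
  assumes "(f has_derivative L) (at p)"
  shows "((\<lambda>t. (f (p + t *\<^sub>R v) - f p) / t) \<longlongrightarrow> L v) (at_right 0)"
proof -
  have "((\<lambda>t. (f (p + t *\<^sub>R v) - f p) / t) \<longlongrightarrow> L v) (at 0)"
    using line_deriv[OF assms, of v] unfolding DERIV_def by simp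
  then show ?thesis by (simp add: filterlim_at_split)
qed

context
  fixes \<phi> :: "'a::euclidean_space \<Rightarrow> real" 
  assumes uc: "uniformly_convex_norm \<phi>"
begin

lemma nrm: "is_norm \<phi>" using uc by (simp add: uniformly_convex_norm_def)

lemma strict_conv:
  assumes "\<phi> u = \<phi> u'" "u \<noteq> u'" "\<phi> u > 0"
  shows "\<phi> ((1/2) *\<^sub>R (u + u')) < \<phi> u"
proof -
  obtain \<gamma> where g: "\<gamma> > 0" "convex_on UNIV (\<lambda>x. \<phi> x - \<gamma> * norm x)"
    using uc by (auto simp: uniformly_convex_norm_def)
  have eqm: "(1 - 1/2) *\<^sub>R u + (1/2) *\<^sub>R u' = (1/2) *\<^sub>R (u + u')" by (simp add: scaleR_add_right)
  have c1: "\<phi> ((1/2) *\<^sub>R (u + u')) - \<gamma> * norm ((1/2) *\<^sub>R (u + u'))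
      \<le> (1 - 1/2) * (\<phi> u - \<gamma> * norm u) + (1/2) * (\<phi> u' - \<gamma> * norm u')"
    unfolding eqm[symmetric] by (rule convex_onD[OF g(2)]) auto
  have nm: "norm ((1/2) *\<^sub>R (u + u')) = norm (u + u') / 2" by simp
  have ineq: "\<phi> ((1/2) *\<^sub>R (u + u')) \<le> \<phi> u - \<gamma> * ((norm u + norm u') / 2 - norm (u + u') / 2)"
    using c1 assms(1) unfolding nm by (simp add: algebra_simps add_divide_distrib)
  have tri: "norm (u + u') \<le> norm u + norm u'" by (rule norm_triangle_ineq)
  show ?thesis
  proof (cases "norm (u + u') = norm u + norm u'")
    case True
    then have eq: "norm u *\<^sub>R u' = norm u' *\<^sub>R u" by (simp add: norm_triangle_eq)
    have "\<phi> (norm u *\<^sub>R u') = \<phi> (norm u' *\<^sub>R u)" by (simp add: eq)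
    then have "norm u * \<phi> u' = norm u' * \<phi> u" by (simp add: phi_scale[OF nrm])
    then have "norm u = norm u'" using assms(1,3) by simp
    moreover have "u \<noteq> 0" using assms(3) phi_zero_iff[OF nrm, of u] by auto
    ultimately have "u' = u" using eq by auto
    then show ?thesis using assms(2) by simp
  next
    case False
    then have "norm (u + u') < norm u + norm u'" using tri by simp
    then have "0 < \<gamma> * ((norm u + norm u') / 2 - norm (u + u') / 2)" using g(1) by simp
    then show ?thesis using ineq by linarith
  qed
qed

context
  fixes f' :: "'a \<Rightarrow> ('a \<Rightarrow>\<^sub>L real)"
  assumes der: "\<And>u. u \<noteq> 0 \<Longrightarrow> (\<phi> has_derivative blinfun_apply (f' u)) (at u)"
begin

lemma euler: "u \<noteq> 0 \<Longrightarrow> f' u u = \<phi> u"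
proof -
  assume u: "u \<noteq> 0"
  have lim: "((\<lambda>t. (\<phi> (u + t *\<^sub>R u) - \<phi> u) / t) \<longlongrightarrow> f' u u) (at_right 0)"
    by (rule ratio_lim[OF der[OF u]])
  have "eventually (\<lambda>t. (\<phi> (u + t *\<^sub>R u) - \<phi> u) / t = \<phi> u) (at_right (0::real))"
  proof -
    have "(\<phi> (u + t *\<^sub>R u) - \<phi> u) / t = \<phi> u" if "t > 0" for t :: real
    proof -
      have "u + t *\<^sub>R u = (1 + t) *\<^sub>R u" by (simp add: algebra_simps)
      then have "\<phi> (u + t *\<^sub>R u) = (1 + t) * \<phi> u" using that by (simp add: phi_scale[OF nrm])
      then show ?thesis using that by (simp add: field_simps)
    qed
    note * = this
    show ?thesis using eventually_at_right_less[of "0::real"] by (rule eventually_mono) (rule *)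
  qed
  then have "((\<lambda>t. (\<phi> (u + t *\<^sub>R u) - \<phi> u) / t) \<longlongrightarrow> \<phi> u) (at_right 0)"
    by (rule tendsto_eventually)
  then show ?thesis using lim tendsto_unique[OF trivial_limit_at_right_real] by blast
qed

lemma deriv_le: "u \<noteq> 0 \<Longrightarrow> f' u v \<le> \<phi> v"
proof -
  assume u: "u \<noteq> 0"
  have lim: "((\<lambda>t. (\<phi> (u + t *\<^sub>R v) - \<phi> u) / t) \<longlongrightarrow> f' u v) (at_right 0)"
    by (rule ratio_lim[OF der[OF u]])
  have "eventually (\<lambda>t. (\<phi> (u + t *\<^sub>R v) - \<phi> u) / t \<le> \<phi> v) (at_right (0::real))"
  proof -
    have "(\<phi> (u + t *\<^sub>R v) - \<phi> u) / t \<le> \<phi> v" if "t > 0" for t :: real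
    proof -
      have "\<phi> (u + t *\<^sub>R v) \<le> \<phi> u + t * \<phi> v" using phi_tri[OF nrm, of u "t *\<^sub>R v"] that
        by (simp add: phi_scale[OF nrm])
      then show ?thesis using that by (simp add: field_simps)
    qed
    note * = this
    show ?thesis using eventually_at_right_less[of "0::real"] by (rule eventually_mono) (rule *)
  qed
  then show ?thesis using lim by (intro tendsto_upperbound) auto
qed

lemma deriv_inj:
  assumes "\<phi> u = \<phi> u'" "\<phi> u > 0" "\<And>w. f' u w = f' u' w"
  shows "u = u'"
proof (rule ccontr)
  assume ne: "u \<noteq> u'"
  have u0: "u \<noteq> 0" using assms(1,2) phi_zero_iff[OF nrm, of u] by auto
  have u0': "u' \<noteq> 0" using assms(1,2) phi_zero_iff[OF nrm, of u'] by auto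
  have "f' u ((1/2) *\<^sub>R (u + u')) = (1/2) * (f' u u + f' u u')"
    by (simp add: blinfun.scaleR_right blinfun.add_right)
  also have "\<dots> = \<phi> u" using euler[OF u0] euler[OF u0'] assms(1,3) by simp
  finally have "\<phi> u \<le> \<phi> ((1/2) *\<^sub>R (u + u'))" using deriv_le[OF u0] by metis
  then show False using strict_conv[OF assms(1) ne assms(2)] by simp
qed

end
end


definition np :: "('a::euclidean_space \<Rightarrow> real) \<Rightarrow> 'a set \<Rightarrow> 'a \<Rightarrow> 'a" where
  "np \<phi> K x = (SOME b. b \<in> K \<and> \<phi> (b - x) = dist_fun \<phi> K x)"

context
  fixes \<phi> :: "'a::euclidean_space \<Rightarrow> real" and K :: "'a set"
    and f' :: "'a \<Rightarrow> ('a \<Rightarrow>\<^sub>L real)"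
  assumes uc: "uniformly_convex_norm \<phi>"
    and der: "\<And>u. u \<noteq> 0 \<Longrightarrow> (\<phi> has_derivative blinfun_apply (f' u)) (at u)"
    and clK: "closed K" and neK: "K \<noteq> {}"
begin

lemmas nrm' = nrm[OF uc]

lemma np_prop: "np \<phi> K x \<in> K \<and> \<phi> (np \<phi> K x - x) = dist_fun \<phi> K x"
  unfolding np_def using nearest_exists[OF nrm' clK neK, of x] by (rule someI2_bex) auto

lemma nearest_unique:
  assumes x: "x \<notin> K" and dif: "dist_fun \<phi> K differentiable (at x)"
    and b: "b \<in> K" "\<phi> (b - x) = dist_fun \<phi> K x"
    and c: "c \<in> K" "\<phi> (c - x) = dist_fun \<phi> K x"
  shows "b = c"
proof -
  obtain D where D: "(dist_fun \<phi> K has_derivative D) (at x)" using dif unfolding differentiable_def by blast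
  have dpos: "dist_fun \<phi> K x > 0"
    using dist_nonneg[OF nrm' clK neK, of x] dist_zero_iff[OF nrm' clK neK, of x] x by linarith
  have key: "f' (b - x) w = D (- w)" if b: "b \<in> K" "\<phi> (b - x) = dist_fun \<phi> K x" for b w
  proof -
    have u: "b - x \<noteq> 0" using b x by auto
    define g where "g t = \<phi> ((b - x) + t *\<^sub>R w) - dist_fun \<phi> K (x + t *\<^sub>R (- w))" for t :: real
    have d1: "((\<lambda>t. \<phi> ((b - x) + t *\<^sub>R w)) has_real_derivative f' (b - x) w) (at 0)"
      by (rule line_deriv[OF der[OF u]])
    have d2: "((\<lambda>t. dist_fun \<phi> K (x + t *\<^sub>R (- w))) has_real_derivative D (- w)) (at 0)"
      by (rule line_deriv[OF D])
    have dg: "(g has_real_derivative (f' (b - x) w - D (- w))) (at 0)"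
      unfolding g_def by (rule DERIV_diff[OF d1 d2])
    have "g 0 \<le> g y" for y
    proof -
      have "dist_fun \<phi> K (x + y *\<^sub>R (- w)) \<le> \<phi> (b - (x + y *\<^sub>R (- w)))"
        by (rule dist_le[OF nrm' clK neK b(1)])
      moreover have "b - (x + y *\<^sub>R (- w)) = (b - x) + y *\<^sub>R w" by (simp add: algebra_simps)
      ultimately have "dist_fun \<phi> K (x + y *\<^sub>R (- w)) \<le> \<phi> ((b - x) + y *\<^sub>R w)" by metis
      moreover have "g 0 = 0" unfolding g_def using b(2) by simp
      ultimately show ?thesis unfolding g_def by simp
    qed
    then have "f' (b - x) w - D (- w) = 0"
      by (intro DERIV_local_min[OF dg, of 1]) auto
    then show ?thesis by simp
  qed
  have "b - x = c - x"
  proof (rule deriv_inj[OF uc der])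
    show "\<phi> (b - x) = \<phi> (c - x)" using b c by simp
    show "\<phi> (b - x) > 0" using b dpos by simp
    show "f' (b - x) w = f' (c - x) w" for w using key[OF b, of w] key[OF c, of w] by simp
  qed
  then show ?thesis by simp
qed

lemma np_cont:
  assumes good: "\<And>w. w \<in> cball x r \<Longrightarrow> w \<notin> K \<and> dist_fun \<phi> K differentiable (at w)"
  shows "continuous_on (cball x r) (np \<phi> K)"
proof -
  obtain a0 where a0: "a0 \<in> K" using neK by blast
  obtain M where M: "M > 0" "\<And>v. \<phi> v \<le> M * norm v" using phi_upper[OF nrm'] by blast
  obtain C where C: "C > 0" "\<And>v. norm v \<le> C * \<phi> v" using phi_lower[OF nrm'] by blast
  define R where "R = r + C * (M * (norm (a0 - x) + r))"
  have bound: "np \<phi> K w \<in> cball x R" if w: "w \<in> cball x r" for w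
  proof -
    have wx: "norm (w - x) \<le> r" using w by (simp add: dist_norm norm_minus_commute)
    have d1: "dist_fun \<phi> K w \<le> \<phi> (a0 - w)" by (rule dist_le[OF nrm' clK neK a0])
    have d2: "\<phi> (a0 - w) \<le> M * norm (a0 - w)" by (rule M(2))
    have d3: "norm (a0 - w) \<le> norm (a0 - x) + norm (x - w)"
      using norm_diff_triangle_le[of a0 x "norm (a0 - x)" w "norm (x - w)"] by simp
    have "M * norm (a0 - w) \<le> M * (norm (a0 - x) + r)"
      using d3 wx M(1) by (intro mult_left_mono) (auto simp: norm_minus_commute)
    with d1 d2 have dw: "dist_fun \<phi> K w \<le> M * (norm (a0 - x) + r)" by linarith
    have e1: "norm (np \<phi> K w - w) \<le> C * \<phi> (np \<phi> K w - w)" by (rule C(2))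
    have e2: "C * \<phi> (np \<phi> K w - w) \<le> C * (M * (norm (a0 - x) + r))"
      using np_prop[of w] dw C(1) by (intro mult_left_mono) auto
    have e3: "norm (np \<phi> K w - x) \<le> norm (np \<phi> K w - w) + norm (w - x)"
      using norm_diff_triangle_le[of "np \<phi> K w" w "norm (np \<phi> K w - w)" x "norm (w - x)"] by simp
    have "norm (np \<phi> K w - x) \<le> R" unfolding R_def using wx e1 e2 e3 by linarith
    then show ?thesis by (simp add: dist_norm norm_minus_commute)
  qed
  have gr: "(\<lambda>w. (w, np \<phi> K w)) ` cball x r =
       (cball x r \<times> K) \<inter> {p. \<phi> (snd p - fst p) = dist_fun \<phi> K (fst p)}"
  proof (intro set_eqI iffI)
    fix p assume "p \<in> (\<lambda>w. (w, np \<phi> K w)) ` cball x r"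
    then show "p \<in> (cball x r \<times> K) \<inter> {p. \<phi> (snd p - fst p) = dist_fun \<phi> K (fst p)}"
      using np_prop by auto
  next
    fix p assume p: "p \<in> (cball x r \<times> K) \<inter> {p. \<phi> (snd p - fst p) = dist_fun \<phi> K (fst p)}"
    obtain w b where wb: "p = (w, b)" by (cases p)
    have "b = np \<phi> K w"
      using nearest_unique[of w b "np \<phi> K w"] good[of w] p np_prop[of w] wb by auto
    then show "p \<in> (\<lambda>w. (w, np \<phi> K w)) ` cball x r" using p wb by auto
  qed
  have c1: "continuous_on UNIV (\<lambda>p::'a \<times> 'a. \<phi> (snd p - fst p))"
    by (rule continuous_on_compose2[OF phi_cont[OF nrm', of UNIV]]) (auto intro!: continuous_intros)
  have c2: "continuous_on UNIV (\<lambda>p::'a \<times> 'a. dist_fun \<phi> K (fst p))"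
    by (rule continuous_on_compose2[OF dist_cont[OF nrm' clK neK, of UNIV]]) (auto intro!: continuous_intros)
  have "closed ((\<lambda>w. (w, np \<phi> K w)) ` cball x r)"
    unfolding gr by (intro closed_Int closed_Times closed_cball clK closed_Collect_eq c1 c2)
  then show ?thesis
    by (intro continuous_from_closed_graph[of "cball x R"]) (use bound in auto)
qed

end


context
  fixes \<phi> :: "'a::euclidean_space \<Rightarrow> real" and K :: "'a set"
    and f' :: "'a \<Rightarrow> ('a \<Rightarrow>\<^sub>L real)" and \<rho> :: real
  assumes uc: "uniformly_convex_norm \<phi>"
    and der: "\<And>u. u \<noteq> 0 \<Longrightarrow> (\<phi> has_derivative blinfun_apply (f' u)) (at u)"
    and clK: "closed K" and neK: "K \<noteq> {}"
    and hyp: "\<And>w. 0 < dist_fun \<phi> K w \<Longrightarrow> dist_fun \<phi> K w < \<rho> \<Longrightarrow> dist_fun \<phi> K differentiable (at w)"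
begin

lemmas nrmE = nrm[OF uc]
abbreviation "d \<equiv> dist_fun \<phi> K"

lemma ray_le: "a \<in> K \<Longrightarrow> \<phi> \<eta> = 1 \<Longrightarrow> 0 \<le> t \<Longrightarrow> d (a + t *\<^sub>R \<eta>) \<le> t"
  using dist_le[OF nrmE clK neK, of a "a + t *\<^sub>R \<eta>"] by (simp add: phi_minus[OF nrmE] phi_scale[OF nrmE])

lemma ray_down:
  assumes "a \<in> K" "\<phi> \<eta> = 1" "d (a + t *\<^sub>R \<eta>) = t" "0 \<le> t'" "t' \<le> t"
  shows "d (a + t' *\<^sub>R \<eta>) = t'"
proof -
  have "d (a + t *\<^sub>R \<eta>) \<le> d (a + t' *\<^sub>R \<eta>) + \<phi> ((a + t *\<^sub>R \<eta>) - (a + t' *\<^sub>R \<eta>))"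
    by (rule dist_lip[OF nrmE clK neK])
  moreover have "(a + t *\<^sub>R \<eta>) - (a + t' *\<^sub>R \<eta>) = (t - t') *\<^sub>R \<eta>" by (simp add: algebra_simps)
  ultimately have "t \<le> d (a + t' *\<^sub>R \<eta>) + (t - t')" using assms by (simp add: phi_scale[OF nrmE])
  then show ?thesis using ray_le[OF assms(1,2,4)] by linarith
qed

lemma ray_main:
  assumes a: "a \<in> K" and eta: "\<phi> \<eta> = 1" and s: "s > 0" "d (a + s *\<^sub>R \<eta>) = s"
    and t: "0 < t" "t < \<rho>"
  shows "d (a + t *\<^sub>R \<eta>) = t"
proof -
  define S where "S = {t. 0 \<le> t \<and> t < \<rho> \<and> d (a + t *\<^sub>R \<eta>) = t}"
  have rho: "\<rho> > 0" using t by simp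
  define s0 where "s0 = min s (\<rho>/2)"
  have s0S: "s0 \<in> S" unfolding S_def s0_def using ray_down[OF a eta s(2), of "min s (\<rho>/2)"] s rho by auto
  have neS: "S \<noteq> {}" using s0S by blast
  have bdS: "bdd_above S" unfolding S_def by (rule bdd_aboveI[of _ \<rho>]) auto
  define T where "T = Sup S"
  have T0: "T \<ge> s0" unfolding T_def by (rule cSup_upper[OF s0S bdS])
  have s0pos: "s0 > 0" unfolding s0_def using s rho by simp
  have Tle: "T \<le> \<rho>" unfolding T_def by (rule cSup_least[OF neS]) (auto simp: S_def)
  have fdT: "d (a + T *\<^sub>R \<eta>) = T"
  proof (rule ccontr)
    assume ne: "d (a + T *\<^sub>R \<eta>) \<noteq> T"
    have le: "d (a + T *\<^sub>R \<eta>) \<le> T" using ray_le[OF a eta] T0 s0pos by simp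
    define e where "e = (T - d (a + T *\<^sub>R \<eta>)) / 2"
    have "T - e < T" using ne le unfolding e_def by simp
    then obtain t' where t': "t' \<in> S" "T - e < t'" using less_cSup_iff[OF neS bdS] unfolding T_def by blast
    have t'T: "t' \<le> T" unfolding T_def by (rule cSup_upper[OF t'(1) bdS])
    have "d (a + T *\<^sub>R \<eta>) \<le> d (a + t' *\<^sub>R \<eta>) + \<phi> ((a + T *\<^sub>R \<eta>) - (a + t' *\<^sub>R \<eta>))"
      by (rule dist_lip[OF nrmE clK neK])
    have "d (a + t' *\<^sub>R \<eta>) \<le> d (a + T *\<^sub>R \<eta>) + \<phi> ((a + t' *\<^sub>R \<eta>) - (a + T *\<^sub>R \<eta>))"
      by (rule dist_lip[OF nrmE clK neK])
    moreover have "(a + t' *\<^sub>R \<eta>) - (a + T *\<^sub>R \<eta>) = (t' - T) *\<^sub>R \<eta>" by (simp add: algebra_simps)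
    ultimately have "t' \<le> d (a + T *\<^sub>R \<eta>) + (T - t')" using t'(1) t'T eta
      by (simp add: phi_scale[OF nrmE] S_def)
    moreover have "T - e < t'" by (rule t'(2))
    ultimately show False unfolding e_def by (simp add: field_simps)
  qed
  have TS: "T \<ge> \<rho>"
  proof (rule ccontr)
    assume "\<not> T \<ge> \<rho>"
    then have Tr: "T < \<rho>" by simp
    have Tpos: "T > 0" using T0 s0pos by simp
    define x where "x = a + T *\<^sub>R \<eta>"
    have dx: "d x = T" using fdT unfolding x_def .
    obtain M where M: "M > 0" "\<And>v. \<phi> v \<le> M * norm v" using phi_upper[OF nrmE] by blast
    obtain C where C: "C > 0" "\<And>v. norm v \<le> C * \<phi> v" using phi_lower[OF nrmE] by blast
    define m where "m = min T (\<rho> - T)"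
    have m: "m \<le> T" "m \<le> \<rho> - T" "m > 0" unfolding m_def using Tpos Tr by auto
    define r where "r = m / (2 * M)"
    have rpos: "r > 0" unfolding r_def using m M(1) by simp
    have Mr: "M * r = m / 2" unfolding r_def using M(1) by simp
    have dball: "T - m / 2 \<le> d w \<and> d w \<le> T + m / 2" if "w \<in> cball x r" for w
    proof -
      have "\<bar>d w - d x\<bar> \<le> \<phi> (w - x)" by (rule dist_lip_abs[OF nrmE clK neK])
      also have "\<dots> \<le> M * norm (w - x)" by (rule M(2))
      also have "\<dots> \<le> M * r" using that M(1) by (intro mult_left_mono) (auto simp: dist_norm norm_minus_commute)
      finally show ?thesis using Mr dx by linarith
    qed
    have dpos: "0 < d w" and dlt: "d w < \<rho>" if "w \<in> cball x r" for w
    proof -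
      show "0 < d w" using dball[OF that] Tpos m by (elim conjE) linarith
      show "d w < \<rho>" using dball[OF that] m by (elim conjE) linarith
    qed
    have good: "w \<notin> K \<and> d differentiable (at w)" if "w \<in> cball x r" for w
      using dpos[OF that] dlt[OF that] hyp dist_zero_iff[OF nrmE clK neK, of w] by auto
    have npc: "continuous_on (cball x r) (np \<phi> K)"
      by (rule np_cont[OF uc der clK neK good])
    define n where "n w = inverse (d w) *\<^sub>R (w - np \<phi> K w)" for w
    have ncont: "continuous_on (cball x r) n"
      unfolding n_def
      by (intro continuous_intros npc continuous_on_subset[OF dist_cont[OF nrmE clK neK]])
         (use dpos in force)+
    have phin: "\<phi> (n w) = 1" if "w \<in> cball x r" for w
    proof -
      have "\<phi> (n w) = inverse (d w) * \<phi> (w - np \<phi> K w)"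
        unfolding n_def using dpos[OF that] by (simp add: phi_scale[OF nrmE])
      also have "\<phi> (w - np \<phi> K w) = d w" using np_prop[OF uc der clK neK, of w] phi_commute[OF nrmE] by metis
      finally show ?thesis using dpos[OF that] by simp
    qed
    define \<epsilon> where "\<epsilon> = min (T/4) (min (r / C) ((\<rho> - T)/2))"
    have epos: "\<epsilon> > 0" unfolding \<epsilon>_def using Tpos rpos C(1) Tr by simp
    define F where "F w = x + \<epsilon> *\<^sub>R n w" for w
    have Fc: "continuous_on (cball x r) F" unfolding F_def by (intro continuous_intros ncont)
    have Fm: "F \<in> cball x r \<rightarrow> cball x r"
    proof
      fix w assume w: "w \<in> cball x r"
      have "norm (\<epsilon> *\<^sub>R n w) = \<epsilon> * norm (n w)" using epos by simp
      also have "\<dots> \<le> \<epsilon> * (C * \<phi> (n w))" using epos C(2) by (intro mult_left_mono) auto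
      also have "\<dots> = \<epsilon> * C" using phin[OF w] by simp
      also have "\<dots> \<le> r"
      proof -
        have "\<epsilon> \<le> r / C" unfolding \<epsilon>_def by simp
        then show ?thesis using C(1) by (simp add: field_simps)
      qed
      finally show "F w \<in> cball x r" unfolding F_def by (simp add: dist_norm)
    qed
    obtain w where w: "w \<in> cball x r" "F w = w" using brouwer_ball[OF rpos Fc Fm] by blast
    define b where "b = np \<phi> K w"
    define \<delta> where "\<delta> = d w"
    have bK: "b \<in> K" and phib: "\<phi> (b - w) = \<delta>" using np_prop[OF uc der clK neK, of w] unfolding b_def \<delta>_def by auto
    have dpw: "\<delta> > 0" unfolding \<delta>_def by (rule dpos[OF w(1)])
    have dge: "\<delta> \<ge> T / 2"
    proof -
      show ?thesis using dball[OF w(1)] m unfolding \<delta>_def by (elim conjE) linarith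
    qed
    have eT: "\<epsilon> \<le> T / 4" unfolding \<epsilon>_def by (rule min.cobounded1)
    have wb: "w - b = \<delta> *\<^sub>R n w" unfolding n_def b_def \<delta>_def using dpw unfolding \<delta>_def by simp
    have wx: "w = x + \<epsilon> *\<^sub>R n w" using w(2) unfolding F_def by simp
    have bx: "b - x = - ((\<delta> - \<epsilon>) *\<^sub>R n w)"
    proof -
      have "b - x = (b - w) + \<epsilon> *\<^sub>R n w" using wx by (simp add: algebra_simps)
      also have "b - w = - (\<delta> *\<^sub>R n w)" using wb by (simp add: algebra_simps)
      finally show ?thesis by (simp add: algebra_simps)
    qed
    have phibx: "\<phi> (b - x) = \<delta> - \<epsilon>"
    proof -
      have "\<delta> - \<epsilon> \<ge> 0" using dge eT Tpos by linarith
      then show ?thesis using bx phin[OF w(1)] by (simp add: phi_minus[OF nrmE] phi_scale[OF nrmE])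
    qed
    have "d w \<le> d x + \<phi> (w - x)" by (rule dist_lip[OF nrmE clK neK])
    moreover have "\<phi> (w - x) = \<epsilon>"
    proof -
      have "w - x = \<epsilon> *\<^sub>R n w" using wx by (metis add_diff_cancel_left')
      then show ?thesis using phin[OF w(1)] epos by (simp add: phi_scale[OF nrmE])
    qed
    ultimately have dxge: "d x \<ge> \<delta> - \<epsilon>" unfolding \<delta>_def by simp
    have dxle: "d x \<le> \<phi> (b - x)" by (rule dist_le[OF nrmE clK neK bK])
    have dxe: "d x = \<delta> - \<epsilon>" using dxge dxle phibx by simp
    have xc: "x \<in> cball x r" using rpos by simp
    have phiax: "\<phi> (a - x) = d x" unfolding x_def using dx eta Tpos
      by (simp add: phi_minus[OF nrmE] phi_scale[OF nrmE] x_def)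
    have "b = a"
      using nearest_unique[OF uc der clK neK, of x b a] good[OF xc] bK a phibx dxe phiax by simp
    then have "- (T *\<^sub>R \<eta>) = - ((\<delta> - \<epsilon>) *\<^sub>R n w)" using bx unfolding x_def by simp
    then have "T *\<^sub>R \<eta> = T *\<^sub>R n w" using dx dxe by simp
    then have nw: "n w = \<eta>" using Tpos by simp
    have "w = a + (T + \<epsilon>) *\<^sub>R \<eta>" using wx nw unfolding x_def by (simp add: algebra_simps)
    moreover have "\<delta> = T + \<epsilon>" using dx dxe by simp
    ultimately have "d (a + (T + \<epsilon>) *\<^sub>R \<eta>) = T + \<epsilon>" unfolding \<delta>_def by simp
    moreover have "T + \<epsilon> < \<rho>"
    proof -
      have "\<epsilon> \<le> (\<rho> - T) / 2" unfolding \<epsilon>_def by (meson min.cobounded2 order_trans)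
      then show ?thesis using Tr by (simp add: field_simps)
    qed
    ultimately have "T + \<epsilon> \<in> S" unfolding S_def using Tpos epos by simp
    then have "T + \<epsilon> \<le> T" unfolding T_def by (rule cSup_upper[OF _ bdS])
    then show False using epos by simp
  qed
  have "t < T" using t TS by simp
  then obtain t' where t': "t' \<in> S" "t < t'" using less_cSup_iff[OF neS bdS] unfolding T_def by blast
  show ?thesis using ray_down[OF a eta, of t' t] t' t unfolding S_def by simp
qed

end


lemma lebesgue_outer_meas: "A \<in> sets lebesgue \<Longrightarrow> lebesgue_outer A = emeasure lebesgue A"
  unfolding lebesgue_outer_def
proof (rule antisym)
  assume A: "A \<in> sets lebesgue"
  show "(INF B\<in>{B \<in> sets lebesgue. A \<subseteq> B}. emeasure lebesgue B) \<le> emeasure lebesgue A"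
    by (rule INF_lower) (use A in auto)
  show "emeasure lebesgue A \<le> (INF B\<in>{B \<in> sets lebesgue. A \<subseteq> B}. emeasure lebesgue B)"
  proof (rule INF_greatest)
    fix B assume "B \<in> {B \<in> sets lebesgue. A \<subseteq> B}"
    then show "emeasure lebesgue A \<le> emeasure lebesgue B" by (intro emeasure_mono) auto
  qed
qed

lemma measure_cball_leb: "r \<ge> 0 \<Longrightarrow> measure lebesgue (cball (c::'a::euclidean_space) r) = unit_ball_vol (DIM('a)) * r ^ DIM('a)"
  using content_cball[of r c] by simp

lemma density_open:
  fixes A :: "'a::euclidean_space set"
  assumes "open G" "p \<in> G" "G \<subseteq> A"
  shows "density_one A p"
proof -
  obtain e where e: "e > 0" "cball p e \<subseteq> G" using assms(1,2) open_contains_cball by blast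
  have "enn2real (lebesgue_outer (A \<inter> cball p r)) / (measure lebesgue (cball (0::'a) 1) * r ^ DIM('a)) = 1"
    if r: "0 < r" "r < e" for r
  proof -
    have "cball p r \<subseteq> cball p e" using r by (intro subset_cball) simp
    then have "A \<inter> cball p r = cball p r" using e assms(3) by blast
    then have "enn2real (lebesgue_outer (A \<inter> cball p r)) = measure lebesgue (cball p r)"
      by (simp add: lebesgue_outer_meas measure_def)
    also have "\<dots> = unit_ball_vol (DIM('a)) * r ^ DIM('a)" by (rule measure_cball_leb) (use r in simp)
    finally have n: "enn2real (lebesgue_outer (A \<inter> cball p r)) = unit_ball_vol (DIM('a)) * r ^ DIM('a)" .
    have "measure lebesgue (cball (0::'a) 1) = unit_ball_vol (DIM('a)) * 1 ^ DIM('a)"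
      by (rule measure_cball_leb) simp
    moreover have "unit_ball_vol (DIM('a)) \<noteq> 0" using unit_ball_vol_pos[of "real DIM('a)"] by linarith
    ultimately show ?thesis unfolding n using r by simp
  qed
  note eq = this
  have "eventually (\<lambda>r. enn2real (lebesgue_outer (A \<inter> cball p r)) / (measure lebesgue (cball (0::'a) 1) * r ^ DIM('a)) = 1) (at_right 0)"
    unfolding eventually_at_right_field using e(1) eq by blast
  then show ?thesis unfolding density_one_def by (rule tendsto_eventually)
qed



lemma real_between:
  assumes "y < ereal \<rho>" "\<rho> > 0"
  shows "\<exists>t. y < ereal t \<and> 0 < t \<and> t < \<rho>"
proof (cases y)
  case (real y')
  define t where "t = (max y' 0 + \<rho>) / 2"
  have "y' < \<rho>" using assms real by simp
  then have "y' < t" "0 < t" "t < \<rho>" unfolding t_def using assms(2) by (auto simp: max_def field_simps)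
  then show ?thesis using real by (intro exI[of _ t]) simp
next
  case PInf then show ?thesis using assms by simp
next
  case MInf then show ?thesis using assms by (intro exI[of _ "\<rho>/2"]) simp
qed

context
  fixes \<phi> :: "'a::euclidean_space \<Rightarrow> real" and K :: "'a set"
    and f' :: "'a \<Rightarrow> ('a \<Rightarrow>\<^sub>L real)" and \<rho> :: real
  assumes uc: "uniformly_convex_norm \<phi>"
    and der: "\<And>u. u \<noteq> 0 \<Longrightarrow> (\<phi> has_derivative blinfun_apply (f' u)) (at u)"
    and clK: "closed K" and neK: "K \<noteq> {}"
    and hyp: "\<And>w. 0 < dist_fun \<phi> K w \<Longrightarrow> dist_fun \<phi> K w < \<rho> \<Longrightarrow> dist_fun \<phi> K differentiable (at w)"
    and rho: "\<rho> > 0"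
begin

lemmas nrm'' = nrm[OF uc]
lemma rmain:
  assumes "a \<in> K" "\<phi> \<eta> = 1" "0 < s" "dist_fun \<phi> K (a + s *\<^sub>R \<eta>) = s" "0 < t" "t < \<rho>"
  shows "dist_fun \<phi> K (a + t *\<^sub>R \<eta>) = t"
  by (rule ray_main[OF uc der clK neK hyp]) (use assms in auto)

lemma rdown:
  assumes "a \<in> K" "\<phi> \<eta> = 1" "dist_fun \<phi> K (a + t *\<^sub>R \<eta>) = t" "0 \<le> t'" "t' \<le> t"
  shows "dist_fun \<phi> K (a + t' *\<^sub>R \<eta>) = t'"
  by (rule ray_down[OF uc der clK neK hyp]) (use assms in auto)

lemma rle:
  assumes "a \<in> K" "\<phi> \<eta> = 1" "0 \<le> t"
  shows "dist_fun \<phi> K (a + t *\<^sub>R \<eta>) \<le> t"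
  by (rule ray_le[OF uc der clK neK hyp]) (use assms in auto)

lemma repr:
  assumes "z \<notin> K"
  shows "\<exists>b \<eta>'. (b, \<eta>') \<in> normal_bundle \<phi> K \<and> z = b + dist_fun \<phi> K z *\<^sub>R \<eta>' \<and> dist_fun \<phi> K z > 0"
proof -
  define b where "b = np \<phi> K z"
  define \<delta> where "\<delta> = dist_fun \<phi> K z"
  have bK: "b \<in> K" and pb: "\<phi> (b - z) = \<delta>" using np_prop[OF uc der clK neK, of z] unfolding b_def \<delta>_def by auto
  have dpos: "\<delta> > 0" unfolding \<delta>_def
    using dist_nonneg[OF nrm'' clK neK, of z] dist_zero_iff[OF nrm'' clK neK, of z] assms by linarith
  define \<eta>' where "\<eta>' = inverse \<delta> *\<^sub>R (z - b)"
  have pe: "\<phi> \<eta>' = 1" unfolding \<eta>'_def using dpos pb phi_commute[OF nrm'', of z b]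
    by (simp add: phi_scale[OF nrm''])
  have zb: "b + \<delta> *\<^sub>R \<eta>' = z" unfolding \<eta>'_def using dpos by simp
  have "(b, \<eta>') \<in> normal_bundle \<phi> K"
    unfolding normal_bundle_def using bK pe zb dpos \<delta>_def by (auto intro!: exI[of _ \<delta>])
  then show ?thesis using zb dpos unfolding \<delta>_def by metis
qed

lemma reach_ge:
  assumes "(b, \<eta>') \<in> normal_bundle \<phi> K"
  shows "ereal \<rho> \<le> reach \<phi> K b \<eta>'"
  unfolding reach_def le_Sup_iff
proof (intro allI impI)
  fix y assume "y < ereal \<rho>"
  then obtain t where t: "y < ereal t" "0 < t" "t < \<rho>" using real_between rho by blast
  obtain s where s: "s > 0" "dist_fun \<phi> K (b + s *\<^sub>R \<eta>') = s" and bK: "b \<in> K" and pe: "\<phi> \<eta>' = 1"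
    using assms unfolding normal_bundle_def by auto
  have "dist_fun \<phi> K (b + t *\<^sub>R \<eta>') = t" by (rule rmain[OF bK pe s t(2,3)])
  then show "\<exists>a\<in>ereal ` {s. 0 < s \<and> dist_fun \<phi> K (b + s *\<^sub>R \<eta>') = s}. y < a" using t by auto
qed

lemma part1:
  assumes N: "(a, \<eta>) \<in> normal_bundle \<phi> K"
  shows "ereal \<rho> \<le> lower_reach \<phi> K a \<eta>"
  unfolding lower_reach_def le_Sup_iff
proof (intro allI impI)
  fix y assume "y < ereal \<rho>"
  then obtain t where t: "y < ereal t" "0 < t" "t < \<rho>" using real_between rho by blast
  obtain s where s: "s > 0" "dist_fun \<phi> K (a + s *\<^sub>R \<eta>) = s" and aK: "a \<in> K" and pe: "\<phi> \<eta> = 1"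
    using N unfolding normal_bundle_def by auto
  define \<sigma> where "\<sigma> = \<rho> / t"
  define r where "r = t * t / \<rho>"
  have sig: "\<sigma> > 1" unfolding \<sigma>_def using t by simp
  have rpos: "r > 0" unfolding r_def using t rho by simp
  have rt: "r < t" unfolding r_def using t rho by (simp add: field_simps)
  have sr: "\<sigma> * r = t" unfolding \<sigma>_def r_def using t rho by (simp add: field_simps)
  have "ereal r < ereal \<rho>" using rt t(3) by simp
  then have rr: "ereal r < reach \<phi> K a \<eta>" using reach_ge[OF N] by (rule less_le_trans)
  define G where "G = dist_fun \<phi> K -` {0<..<t}"
  have oG: "open G" unfolding G_def by (intro open_vimage dist_cont[OF nrm'' clK neK]) simp
  have pG: "a + r *\<^sub>R \<eta> \<in> G" unfolding G_def using rmain[OF aK pe s rpos] rt t rho rpos by simp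
  have GK: "G \<subseteq> K_sigma \<phi> K \<sigma>"
  proof
    fix z assume z: "z \<in> G"
    then have zd: "0 < dist_fun \<phi> K z" "dist_fun \<phi> K z < t" unfolding G_def by auto
    then have "z \<notin> K" using dist_zero_iff[OF nrm'' clK neK, of z] by auto
    then obtain b \<eta>' where b: "(b, \<eta>') \<in> normal_bundle \<phi> K" "z = b + dist_fun \<phi> K z *\<^sub>R \<eta>'"
      using repr by blast
    have "\<sigma> * dist_fun \<phi> K z < \<rho>" using zd t unfolding \<sigma>_def by (simp add: field_simps)
    then have "ereal (\<sigma> * dist_fun \<phi> K z) \<le> ereal \<rho>" by simp
    then have "ereal (\<sigma> * dist_fun \<phi> K z) \<le> reach \<phi> K b \<eta>'" using reach_ge[OF b(1)] by (rule order_trans)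
    moreover have "0 < \<sigma> * dist_fun \<phi> K z" using sig zd by simp
    ultimately show "z \<in> K_sigma \<phi> K \<sigma>" unfolding K_sigma_def using b by blast
  qed
  have "density_one (K_sigma \<phi> K \<sigma>) (a + r *\<^sub>R \<eta>)" by (rule density_open[OF oG pG GK])
  then have "ereal (\<sigma> * r) \<in> {ereal (\<sigma> * r) |\<sigma> r. 0 < r \<and> ereal r < reach \<phi> K a \<eta> \<and> \<sigma> > 1
       \<and> density_one (K_sigma \<phi> K \<sigma>) (a + r *\<^sub>R \<eta>)}" using rpos rr sig by blast
  moreover have "y < ereal (\<sigma> * r)" using sr t(1) by simp
  ultimately show "\<exists>x\<in>{ereal (\<sigma> * r) |\<sigma> r. 0 < r \<and> ereal r < reach \<phi> K a \<eta> \<and> 1 < \<sigma> \<and>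
              density_one (K_sigma \<phi> K \<sigma>) (a + r *\<^sub>R \<eta>)} \<union> {0}. y < x"
    by blast
qed

lemma ray_convex:
  assumes cv: "convex K" and N: "(b, \<eta>') \<in> normal_bundle \<phi> K" and t: "t > 0"
  shows "dist_fun \<phi> K (b + t *\<^sub>R \<eta>') = t"
proof -
  obtain s where s: "s > 0" "dist_fun \<phi> K (b + s *\<^sub>R \<eta>') = s" and bK: "b \<in> K" and pe: "\<phi> \<eta>' = 1"
    using N unfolding normal_bundle_def by auto
  show ?thesis
  proof (cases "t \<le> s")
    case True then show ?thesis using rdown[OF bK pe s(2)] t by simp
  next
    case False
    define c where "c = np \<phi> K (b + t *\<^sub>R \<eta>')"
    have cK: "c \<in> K" and pc: "\<phi> (c - (b + t *\<^sub>R \<eta>')) = dist_fun \<phi> K (b + t *\<^sub>R \<eta>')"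
      using np_prop[OF uc der clK neK] unfolding c_def by auto
    define l where "l = s / t"
    have l: "0 \<le> l" "l \<le> 1" unfolding l_def using False s by auto
    have qK: "(1 - l) *\<^sub>R b + l *\<^sub>R c \<in> K" using convexD_alt[OF cv bK cK l] by simp
    have eq: "(1 - l) *\<^sub>R b + l *\<^sub>R c - (b + s *\<^sub>R \<eta>') = l *\<^sub>R (c - (b + t *\<^sub>R \<eta>'))"
      unfolding l_def using t by (simp add: algebra_simps)
    have "s \<le> \<phi> ((1 - l) *\<^sub>R b + l *\<^sub>R c - (b + s *\<^sub>R \<eta>'))"
      using dist_le[OF nrm'' clK neK qK, of "b + s *\<^sub>R \<eta>'"] s by simp
    also have "\<dots> = l * dist_fun \<phi> K (b + t *\<^sub>R \<eta>')" unfolding eq using l pc by (simp add: phi_scale[OF nrm''])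
    finally have "s \<le> s / t * dist_fun \<phi> K (b + t *\<^sub>R \<eta>')" unfolding l_def .
    then have "t \<le> dist_fun \<phi> K (b + t *\<^sub>R \<eta>')" using s t by (simp add: field_simps)
    moreover have "dist_fun \<phi> K (b + t *\<^sub>R \<eta>') \<le> t" using rle[OF bK pe] t by simp
    ultimately show ?thesis by simp
  qed
qed

lemma reach_inf:
  assumes cv: "convex K" and N: "(b, \<eta>') \<in> normal_bundle \<phi> K"
  shows "reach \<phi> K b \<eta>' = \<infinity>"
proof -
  have "reach \<phi> K b \<eta>' = top"
    unfolding reach_def Sup_eq_top_iff
  proof (intro allI impI)
    fix y :: ereal assume "y < top"
    define t where "t = \<bar>real_of_ereal y\<bar> + (1::real)"
    have tpos: "t > 0" unfolding t_def using abs_ge_zero[of "real_of_ereal y"] by linarith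
    have "y < ereal t" using \<open>y < top\<close> unfolding t_def by (cases y) auto
    moreover have "dist_fun \<phi> K (b + t *\<^sub>R \<eta>') = t" by (rule ray_convex[OF cv N tpos])
    ultimately show "\<exists>i\<in>ereal ` {s. 0 < s \<and> dist_fun \<phi> K (b + s *\<^sub>R \<eta>') = s}. y < i" using tpos by auto
  qed
  then show ?thesis by (simp add: top_ereal_def)
qed

lemma part2:
  assumes cv: "convex K" and N: "(a, \<eta>) \<in> normal_bundle \<phi> K"
  shows "lower_reach \<phi> K a \<eta> = \<infinity>"
proof -
  have "lower_reach \<phi> K a \<eta> = top"
    unfolding lower_reach_def Sup_eq_top_iff
  proof (intro allI impI)
    fix y :: ereal assume "y < top"
    define r where "r = \<bar>real_of_ereal y\<bar> + (1::real)"
    have rpos: "r > 0" unfolding r_def using abs_ge_zero[of "real_of_ereal y"] by linarith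
    have yr: "y < ereal (2 * r)" using \<open>y < top\<close> unfolding r_def by (cases y) auto
    have rr: "ereal r < reach \<phi> K a \<eta>" using reach_inf[OF cv N] by simp
    have oG: "open (- K)" using clK by (simp add: open_Compl)
    have "dist_fun \<phi> K (a + r *\<^sub>R \<eta>) = r" by (rule ray_convex[OF cv N rpos])
    then have pG: "a + r *\<^sub>R \<eta> \<in> - K" using dist_zero_iff[OF nrm'' clK neK, of "a + r *\<^sub>R \<eta>"] rpos by auto
    have GK: "- K \<subseteq> K_sigma \<phi> K 2"
    proof
      fix z assume "z \<in> - K"
      then obtain b \<eta>' where b: "(b, \<eta>') \<in> normal_bundle \<phi> K" "z = b + dist_fun \<phi> K z *\<^sub>R \<eta>'" "dist_fun \<phi> K z > 0"
        using repr by blast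
      have "ereal (2 * dist_fun \<phi> K z) \<le> reach \<phi> K b \<eta>'" using reach_inf[OF cv b(1)] by simp
      moreover have "0 < 2 * dist_fun \<phi> K z" using b(3) by simp
      ultimately show "z \<in> K_sigma \<phi> K 2" unfolding K_sigma_def using b by blast
    qed
    have "density_one (K_sigma \<phi> K 2) (a + r *\<^sub>R \<eta>)" by (rule density_open[OF oG pG GK])
    then have "ereal (2 * r) \<in> {ereal (\<sigma> * r) |\<sigma> r. 0 < r \<and> ereal r < reach \<phi> K a \<eta> \<and> \<sigma> > 1
       \<and> density_one (K_sigma \<phi> K \<sigma>) (a + r *\<^sub>R \<eta>)}" using rpos rr by fastforce
    then show "\<exists>x\<in>{ereal (\<sigma> * r) |\<sigma> r. 0 < r \<and> ereal r < reach \<phi> K a \<eta> \<and> 1 < \<sigma> \<and>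
              density_one (K_sigma \<phi> K \<sigma>) (a + r *\<^sub>R \<eta>)} \<union> {0}. y < x"
      using yr by blast
  qed
  then show ?thesis by (simp add: top_ereal_def)
qed

end

theorem lemma4p16:
  fixes \<phi> :: "'a::euclidean_space \<Rightarrow> real" and K :: "'a set" and \<rho> :: real
  assumes "uniformly_convex_norm \<phi>"
    and "C2_on (UNIV - {0}) \<phi>"
    and "closed K"
    and "\<rho> > 0"
    and "{x. dist_fun \<phi> K x < \<rho>} \<inter> Sigma_set \<phi> K = {}"
  shows "(\<forall>(a, \<eta>) \<in> normal_bundle \<phi> K. ereal \<rho> \<le> lower_reach \<phi> K a \<eta>)
    \<and> (convex K \<longrightarrow> (\<forall>(a, \<eta>) \<in> normal_bundle \<phi> K. lower_reach \<phi> K a \<eta> = (\<infinity>::ereal)))"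
proof -
  from assms(2) obtain f' :: "'a \<Rightarrow> ('a \<Rightarrow>\<^sub>L real)"
    where der: "\<And>u. u \<noteq> 0 \<Longrightarrow> (\<phi> has_derivative blinfun_apply (f' u)) (at u)"
    unfolding C2_on_def by blast
  show ?thesis
  proof (cases "K = {}")
    case True
    then have "normal_bundle \<phi> K = {}" by (simp add: normal_bundle_def)
    then show ?thesis by simp
  next
    case False
    have hyp: "dist_fun \<phi> K differentiable (at w)"
      if w: "0 < dist_fun \<phi> K w" "dist_fun \<phi> K w < \<rho>" for w
    proof -
      have "w \<notin> Sigma_set \<phi> K" using w assms(5) by blast
      moreover have "w \<notin> K" using w dist_zero_iff[OF nrm[OF assms(1)] assms(3) False, of w] by auto
      ultimately show ?thesis unfolding Sigma_set_def by blast
    qed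
    have p1: "ereal \<rho> \<le> lower_reach \<phi> K a \<eta>" if "(a, \<eta>) \<in> normal_bundle \<phi> K" for a \<eta>
      by (rule part1[where f'=f']) (use assms der hyp False that in auto)
    have p2: "lower_reach \<phi> K a \<eta> = \<infinity>" if "convex K" "(a, \<eta>) \<in> normal_bundle \<phi> K" for a \<eta>
      by (rule part2[where f'=f' and \<rho>=\<rho>]) (use assms der hyp False that in auto)
    show ?thesis using p1 p2 by auto
  qed
qed

end
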